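(* Let $M,K\in\mathbb{R}^{m\times m}$ be symmetric positive semidefinite matrices with at least one of them positive definite, and let $\nu,\omega,\theta,H_1,H_2,R,P_\alpha$ be as defined in the context. Then $\rho(P_\alpha)<1$ for every $\alpha>0$, i.e. the MBAS iteration converges unconditionally.
   Context: $\nu>0$, $\omega>0$, $\theta=1+\nu\omega^2$, $I$ is the $m\times m$ identity, $H_1=\begin{pmatrix} M&0\\0&M\end{pmatrix}$, $H_2=\begin{pmatrix} K&0\\0&K\end{pmatrix}$, $R=\frac{1}{\sqrt{\nu\theta}}\begin{pmatrix} -i\omega\nu I & \sqrt{\nu} I\\ -\sqrt{\nu} I & i\omega\nu I\end{pmatrix}$, and for $\alpha>0$, $P_\alpha=(\alpha I_{2m}+\sqrt{\nu\theta}H_2)^{-1}(\alpha I_{2m}+\theta RH_1)(\alpha I_{2m}+\theta H_1)^{-1}(\alpha I_{2m}-\sqrt{\nu\theta}RH_2)$. $\rho(\cdot)$ denotes spectral radius. *)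

theory Defs
  imports "Jordan_Normal_Form.Spectral_Radius" "Jordan_Normal_Form.Gauss_Jordan_Elimination"
begin

definition sym_psd_mat :: "nat \<Rightarrow> real mat \<Rightarrow> bool" where
  "sym_psd_mat m A \<longleftrightarrow> A \<in> carrier_mat m m \<and> transpose_mat A = A \<and>
     (\<forall>x \<in> carrier_vec m. 0 \<le> x \<bullet> (A *\<^sub>v x))"

definition sym_pd_mat :: "nat \<Rightarrow> real mat \<Rightarrow> bool" where
  "sym_pd_mat m A \<longleftrightarrow> A \<in> carrier_mat m m \<and> transpose_mat A = A \<and>
     (\<forall>x \<in> carrier_vec m. x \<noteq> 0\<^sub>v m \<longrightarrow> 0 < x \<bullet> (A *\<^sub>v x))"

text \<open>Matrix inverse (meaningful for invertible square matrices).\<close>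
definition minv :: "complex mat \<Rightarrow> complex mat" where
  "minv A = the (mat_inverse A)"

definition theta :: "real \<Rightarrow> real \<Rightarrow> real" where
  "theta \<nu> \<omega> = 1 + \<nu> * \<omega>^2"

definition blkdiag :: "nat \<Rightarrow> real mat \<Rightarrow> complex mat" where
  "blkdiag m A = four_block_mat (map_mat complex_of_real A) (0\<^sub>m m m) (0\<^sub>m m m) (map_mat complex_of_real A)"

definition Rmat :: "nat \<Rightarrow> real \<Rightarrow> real \<Rightarrow> complex mat" where
  "Rmat m \<nu> \<omega> = complex_of_real (1 / sqrt (\<nu> * theta \<nu> \<omega>)) \<cdot>\<^sub>m
     four_block_mat ((- \<i> * complex_of_real (\<omega> * \<nu>)) \<cdot>\<^sub>m 1\<^sub>m m) (complex_of_real (sqrt \<nu>) \<cdot>\<^sub>m 1\<^sub>m m)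
                    ((- complex_of_real (sqrt \<nu>)) \<cdot>\<^sub>m 1\<^sub>m m) ((\<i> * complex_of_real (\<omega> * \<nu>)) \<cdot>\<^sub>m 1\<^sub>m m)"

definition Palpha :: "nat \<Rightarrow> real \<Rightarrow> real \<Rightarrow> real mat \<Rightarrow> real mat \<Rightarrow> real \<Rightarrow> complex mat" where
  "Palpha m \<nu> \<omega> M K \<alpha> =
     (let \<theta> = theta \<nu> \<omega>; a = complex_of_real \<alpha>; I2 = 1\<^sub>m (2*m);
          H1 = blkdiag m M; H2 = blkdiag m K; R = Rmat m \<nu> \<omega>;
          s = complex_of_real (sqrt (\<nu> * \<theta>)); t = complex_of_real \<theta> in
      minv (a \<cdot>\<^sub>m I2 + s \<cdot>\<^sub>m H2) * (a \<cdot>\<^sub>m I2 + t \<cdot>\<^sub>m (R * H1)) *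
      minv (a \<cdot>\<^sub>m I2 + t \<cdot>\<^sub>m H1) * (a \<cdot>\<^sub>m I2 - s \<cdot>\<^sub>m (R * H2)))"

end

theory Submission
  imports Defs
begin

definition adjm :: "complex mat \<Rightarrow> complex mat" where
  "adjm A = mat (dim_col A) (dim_row A) (\<lambda>(i,j). cnj (A $$ (j,i)))"

lemma adjm_ip:
  assumes A: "A \<in> carrier_mat n n" and u: "u \<in> carrier_vec n" and v: "v \<in> carrier_vec n"
  shows "(A *\<^sub>v u) \<bullet>c v = u \<bullet>c (adjm A *\<^sub>v v)"
proof -
  have "(A *\<^sub>v u) \<bullet>c v = (\<Sum>i<n. (\<Sum>j<n. A $$ (i,j) * u $ j) * cnj (v $ i))"
    using A u v by (simp add: scalar_prod_def mult_mat_vec_def row_def lessThan_atLeast0)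
  also have "\<dots> = (\<Sum>i<n. \<Sum>j<n. A $$ (i,j) * u $ j * cnj (v $ i))"
    by (simp add: sum_distrib_right)
  also have "\<dots> = (\<Sum>j<n. \<Sum>i<n. A $$ (i,j) * u $ j * cnj (v $ i))"
    by (rule sum.swap)
  also have "\<dots> = (\<Sum>j<n. u $ j * cnj (\<Sum>i<n. cnj (A $$ (i,j)) * v $ i))"
    by (simp add: sum_distrib_left ac_simps)
  also have "\<dots> = u \<bullet>c (adjm A *\<^sub>v v)"
    using A u v by (simp add: scalar_prod_def mult_mat_vec_def row_def adjm_def lessThan_atLeast0)
  finally show ?thesis .
qed

lemma ip_cnj:
  assumes u: "u \<in> carrier_vec n" and v: "v \<in> carrier_vec n"
  shows "u \<bullet>c v = cnj (v \<bullet>c u)"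
  using u v by (simp add: scalar_prod_def mult.commute)

lemma ip_sum: "u \<in> carrier_vec n \<Longrightarrow> v \<in> carrier_vec n \<Longrightarrow> u \<bullet>c v = (\<Sum>i<n. u$i * cnj (v$i))"
  by (simp add: scalar_prod_def lessThan_atLeast0)

lemma e1: "Re ((complex_of_real a * x + complex_of_real b * y) * cnj (complex_of_real a * x + complex_of_real b * y))
  = a^2 * Re (x * cnj x) + 2*a*b * Re (y * cnj x) + b^2 * Re (y * cnj y)"
  by (simp add: algebra_simps power2_eq_square)

lemma e2: "Re (complex_of_real A * y * cnj x) = A * (Re y * Re x + Im y * Im x)"
  by (simp add: algebra_simps)

lemma ip_expand:
  assumes u: "u \<in> carrier_vec n" and z: "z \<in> carrier_vec n"
  shows "Re ((complex_of_real a \<cdot>\<^sub>v u + complex_of_real b \<cdot>\<^sub>v z) \<bullet>c (complex_of_real a \<cdot>\<^sub>v u + complex_of_real b \<cdot>\<^sub>v z))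
    = a^2 * Re (u \<bullet>c u) + 2 * a * b * Re (z \<bullet>c u) + b^2 * Re (z \<bullet>c z)"
proof -
  let ?w = "complex_of_real a \<cdot>\<^sub>v u + complex_of_real b \<cdot>\<^sub>v z"
  have w: "?w \<in> carrier_vec n" using u z by simp
  have wi: "\<And>i. i < n \<Longrightarrow> ?w $ i = complex_of_real a * u$i + complex_of_real b * z$i"
    using u z by simp
  have "Re (?w \<bullet>c ?w) = (\<Sum>i<n. Re (?w$i * cnj (?w$i)))"
    unfolding ip_sum[OF w w] Re_sum ..
  also have "\<dots> = (\<Sum>i<n. a^2 * Re (u$i * cnj (u$i)) + 2*a*b * Re (z$i * cnj (u$i)) + b^2 * Re (z$i * cnj (z$i)))"
    by (rule sum.cong) (simp_all only: wi e1 lessThan_iff)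
  also have "\<dots> = a^2 * (\<Sum>i<n. Re (u$i * cnj (u$i))) + 2*a*b * (\<Sum>i<n. Re (z$i * cnj (u$i))) + b^2 * (\<Sum>i<n. Re (z$i * cnj (z$i)))"
    by (simp only: sum.distrib sum_distrib_left)
  also have "\<dots> = a^2 * Re (u \<bullet>c u) + 2 * a * b * Re (z \<bullet>c u) + b^2 * Re (z \<bullet>c z)"
    unfolding ip_sum[OF u u] ip_sum[OF z u] ip_sum[OF z z] Re_sum ..
  finally show ?thesis .
qed

lemma re_quad:
  assumes A: "(A :: real mat) \<in> carrier_mat n n" and u: "u \<in> carrier_vec n"
  shows "Re ((map_mat complex_of_real A *\<^sub>v u) \<bullet>c u) =
     map_vec Re u \<bullet> (A *\<^sub>v map_vec Re u) + map_vec Im u \<bullet> (A *\<^sub>v map_vec Im u)"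
proof -
  have Au: "map_mat complex_of_real A *\<^sub>v u \<in> carrier_vec n" using A u by simp
  have Ai: "\<And>i. i < n \<Longrightarrow> (map_mat complex_of_real A *\<^sub>v u) $ i = (\<Sum>j<n. complex_of_real (A $$ (i,j)) * u $ j)"
    using A u by (simp add: scalar_prod_def row_def lessThan_atLeast0)
  have "Re ((map_mat complex_of_real A *\<^sub>v u) \<bullet>c u) = (\<Sum>i<n. Re ((\<Sum>j<n. complex_of_real (A $$ (i,j)) * u $ j) * cnj (u$i)))"
    unfolding ip_sum[OF Au u] Re_sum by (rule sum.cong) (simp_all only: Ai lessThan_iff)
  also have "\<dots> = (\<Sum>i<n. \<Sum>j<n. A $$ (i,j) * (Re (u$j) * Re (u$i) + Im (u$j) * Im (u$i)))"
    by (rule sum.cong) (simp_all only: sum_distrib_right Re_sum e2)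
  also have "\<dots> = (\<Sum>i<n. Re (u$i) * (\<Sum>j<n. A $$ (i,j) * Re (u$j))) + (\<Sum>i<n. Im (u$i) * (\<Sum>j<n. A $$ (i,j) * Im (u$j)))"
    unfolding sum.distrib[symmetric] sum_distrib_left
    by (rule sum.cong, simp, rule sum.cong, simp, simp add: algebra_simps)
  also have "\<dots> = map_vec Re u \<bullet> (A *\<^sub>v map_vec Re u) + map_vec Im u \<bullet> (A *\<^sub>v map_vec Im u)"
    using A u by (simp add: scalar_prod_def row_def lessThan_atLeast0)
  finally show ?thesis .
qed

definition Dm :: "nat \<Rightarrow> complex \<Rightarrow> complex mat" where "Dm m x = x \<cdot>\<^sub>m 1\<^sub>m m"

lemma Dm_carrier[simp]: "Dm m x \<in> carrier_mat m m" by (simp add: Dm_def)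

lemma Dm_mult_Dm[simp]: "Dm m x * Dm m y = Dm m (x * y)"
  by (rule eq_matI) (auto simp: Dm_def)

lemma Dm_add[simp]: "Dm m x + Dm m y = Dm m (x + y)"
  by (rule eq_matI) (auto simp: Dm_def algebra_simps)

lemma Dm_mult_left[simp]: "B \<in> carrier_mat m k \<Longrightarrow> Dm m x * B = x \<cdot>\<^sub>m B"
  by (simp add: Dm_def mult_smult_assoc_mat[of _ m m])

lemma Dm_mult_right[simp]: "B \<in> carrier_mat k m \<Longrightarrow> B * Dm m x = x \<cdot>\<^sub>m B"
  unfolding Dm_def by (subst mult_smult_distrib[where nr=k and n=m and nc=m]) (auto simp: right_mult_one_mat)

lemma dim_Dm[simp]: "dim_row (Dm m x) = m" "dim_col (Dm m x) = m" by (auto simp: Dm_def)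

definition R0 :: "nat \<Rightarrow> real \<Rightarrow> real \<Rightarrow> complex mat" where
  "R0 m r q = four_block_mat (Dm m (\<i> * of_real r)) (Dm m (of_real q)) (Dm m (- of_real q)) (Dm m (- \<i> * of_real r))"

definition H0 :: "nat \<Rightarrow> complex mat \<Rightarrow> complex mat" where
  "H0 m A = four_block_mat A (0\<^sub>m m m) (0\<^sub>m m m) A"

lemma R0_carrier[simp]: "R0 m r q \<in> carrier_mat (2*m) (2*m)"
  unfolding R0_def using four_block_carrier_mat[OF Dm_carrier Dm_carrier] by (simp add: mult_2)

lemma H0_carrier[simp]: "A \<in> carrier_mat m m \<Longrightarrow> H0 m A \<in> carrier_mat (2*m) (2*m)"
  unfolding H0_def using four_block_carrier_mat by (simp add: mult_2)

lemma R0_sq: assumes "r^2 + q^2 = 1"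
  shows "R0 m r q * R0 m r q = - 1\<^sub>m (2*m)"
proof -
  have c: "complex_of_real q * complex_of_real q + complex_of_real r * complex_of_real r = 1"
    using assms by (metis add.commute of_real_1 of_real_add of_real_mult power2_eq_square)
  have k1: "\<i> * complex_of_real r * (\<i> * complex_of_real r) - complex_of_real q * complex_of_real q = -(complex_of_real q * complex_of_real q + complex_of_real r * complex_of_real r)"
    by (simp add: algebra_simps)
  have key: "\<i> * complex_of_real r * (\<i> * complex_of_real r) - complex_of_real q * complex_of_real q = -1"
    unfolding k1 c ..
  have "R0 m r q * R0 m r q = four_block_mat (Dm m (-1)) (Dm m 0) (Dm m 0) (Dm m (-1))"
    unfolding R0_def
    apply (subst mult_four_block_mat[OF Dm_carrier Dm_carrier Dm_carrier Dm_carrier Dm_carrier Dm_carrier Dm_carrier Dm_carrier])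
    apply (simp_all)
    apply (rule cong_four_block_mat)
    apply (simp_all only: key)
    done
  also have "\<dots> = - 1\<^sub>m (2*m)"
    by (rule eq_matI) (auto simp: Dm_def)
  finally show ?thesis .
qed

lemma adjm_index[simp]: "i < dim_col A \<Longrightarrow> j < dim_row A \<Longrightarrow> adjm A $$ (i,j) = cnj (A $$ (j,i))"
  by (simp add: adjm_def)
lemma adjm_dim[simp]: "dim_row (adjm A) = dim_col A" "dim_col (adjm A) = dim_row A"
  by (simp_all add: adjm_def)

lemma adjm_four_block: assumes "A \<in> carrier_mat m m" "B \<in> carrier_mat m m" "C \<in> carrier_mat m m" "D \<in> carrier_mat m m"
  shows "adjm (four_block_mat A B C D) = four_block_mat (adjm A) (adjm C) (adjm B) (adjm D)"
proof (rule eq_matI)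
  fix i j assume i: "i < dim_row (four_block_mat (adjm A) (adjm C) (adjm B) (adjm D))"
    and j: "j < dim_col (four_block_mat (adjm A) (adjm C) (adjm B) (adjm D))"
  have i': "i < m + m" and j': "j < m + m" using i j assms by auto
  show "adjm (four_block_mat A B C D) $$ (i, j) = four_block_mat (adjm A) (adjm C) (adjm B) (adjm D) $$ (i, j)"
    using i' j' assms by (cases "i < m"; cases "j < m") auto
qed (insert assms, auto)

lemma adjm_Dm[simp]: "adjm (Dm m x) = Dm m (cnj x)"
  by (rule eq_matI) (auto simp: Dm_def)

lemma uminus_Dm: "- Dm m x = Dm m (- x)"
  by (rule eq_matI) (auto simp: Dm_def)

lemma uminus_four_block: assumes "A \<in> carrier_mat m m" "B \<in> carrier_mat m m" "C \<in> carrier_mat m m" "D \<in> carrier_mat m m"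
  shows "- four_block_mat A B C D = four_block_mat (-A) (-B) (-C) (-D)"
proof (rule eq_matI)
  fix i j assume i: "i < dim_row (four_block_mat (-A) (-B) (-C) (-D))"
    and j: "j < dim_col (four_block_mat (-A) (-B) (-C) (-D))"
  have i': "i < m + m" and j': "j < m + m" using i j assms by auto
  show "(- four_block_mat A B C D) $$ (i, j) = four_block_mat (-A) (-B) (-C) (-D) $$ (i, j)"
    using i' j' assms by (cases "i < m"; cases "j < m") auto
qed (insert assms, auto)

lemma R0_adj: "adjm (R0 m r q) = - R0 m r q"
  unfolding R0_def
  apply (subst adjm_four_block[OF Dm_carrier Dm_carrier Dm_carrier Dm_carrier])
  apply (subst uminus_four_block[OF Dm_carrier Dm_carrier Dm_carrier Dm_carrier])
  apply (simp only: adjm_Dm uminus_Dm)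
  apply (rule cong_four_block_mat)
  apply (simp_all)
  done
lemma R0_H0_comm: assumes A: "A \<in> carrier_mat m m"
  shows "R0 m r q * H0 m A = H0 m A * R0 m r q"
  unfolding R0_def H0_def
  apply (subst mult_four_block_mat[OF Dm_carrier Dm_carrier Dm_carrier Dm_carrier A zero_carrier_mat zero_carrier_mat A])
  apply (subst mult_four_block_mat[OF A zero_carrier_mat zero_carrier_mat A Dm_carrier Dm_carrier Dm_carrier Dm_carrier])
  apply (rule cong_four_block_mat)
  apply (simp_all only: Dm_mult_left[OF A] Dm_mult_right[OF A] right_mult_zero_mat[OF Dm_carrier] left_mult_zero_mat[OF Dm_carrier])
  using A by (simp_all)

lemma adjm_zero[simp]: "adjm (0\<^sub>m n k) = 0\<^sub>m k n"
  by (rule eq_matI) auto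

lemma H0_adj: assumes K: "K \<in> carrier_mat m m" "transpose_mat K = K"
  shows "adjm (H0 m (map_mat complex_of_real K)) = H0 m (map_mat complex_of_real K)"
proof -
  have s: "\<And>i j. i < m \<Longrightarrow> j < m \<Longrightarrow> K $$ (j,i) = K $$ (i,j)"
    using K by (metis carrier_matD index_transpose_mat(1))
  have Kc: "map_mat complex_of_real K \<in> carrier_mat m m" using K by simp
  have a: "adjm (map_mat complex_of_real K) = map_mat complex_of_real K"
    by (rule eq_matI) (insert K, auto simp: s)
  show ?thesis unfolding H0_def
    apply (subst adjm_four_block[OF Kc zero_carrier_mat zero_carrier_mat Kc])
    by (simp only: a adjm_zero)
qed

definition nsq :: "complex vec \<Rightarrow> real" where "nsq v = Re (v \<bullet>c v)"

lemma smult_mat_vec: "A \<in> carrier_mat nr nc \<Longrightarrow> v \<in> carrier_vec nc \<Longrightarrow> (k \<cdot>\<^sub>m A) *\<^sub>v v = k \<cdot>\<^sub>v (A *\<^sub>v (v :: complex vec))"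
  by (rule eq_vecI) (auto simp: mult_mat_vec_def scalar_prod_def sum_distrib_left mult.assoc)

lemma ip_neg_right: "x \<bullet>c (- y) = - (x \<bullet>c (y :: complex vec))"
  by (simp add: scalar_prod_def sum_negf)

lemma lin_vec: assumes H: "H \<in> carrier_mat n n" and v: "v \<in> carrier_vec n"
  shows "(complex_of_real a \<cdot>\<^sub>m 1\<^sub>m n + complex_of_real c \<cdot>\<^sub>m H) *\<^sub>v v = complex_of_real a \<cdot>\<^sub>v v + complex_of_real c \<cdot>\<^sub>v (H *\<^sub>v v)"
  using H v by (subst add_mult_distrib_mat_vec[of _ n n]) (auto simp: smult_mat_vec)

lemma plus_norm: assumes H: "H \<in> carrier_mat n n" and v: "v \<in> carrier_vec n"
  shows "nsq ((complex_of_real a \<cdot>\<^sub>m 1\<^sub>m n + complex_of_real c \<cdot>\<^sub>m H) *\<^sub>v v) =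
    a^2 * nsq v + 2 * a * c * Re ((H *\<^sub>v v) \<bullet>c v) + c^2 * nsq (H *\<^sub>v v)"
  unfolding lin_vec[OF H v] nsq_def using H v by (subst ip_expand[of _ n]) auto

lemma rot_norm: assumes R: "R \<in> carrier_mat n n" and H: "H \<in> carrier_mat n n"
  and aR: "adjm R = - R" and RR: "R * R = - 1\<^sub>m n" and aH: "adjm H = H" and c: "R * H = H * R"
  and v: "v \<in> carrier_vec n"
  shows "nsq ((complex_of_real a \<cdot>\<^sub>m 1\<^sub>m n + complex_of_real c \<cdot>\<^sub>m (R * H)) *\<^sub>v v) =
    a^2 * nsq v + c^2 * nsq (H *\<^sub>v v)"
proof -
  define w where "w = H *\<^sub>v v"
  define z where "z = R *\<^sub>v w"
  have RH: "R * H \<in> carrier_mat n n" using R H by simp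
  have w: "w \<in> carrier_vec n" using H v w_def by simp
  have z: "z \<in> carrier_vec n" using R w z_def by simp
  have Rv: "R *\<^sub>v v \<in> carrier_vec n" using R v by simp
  have zv: "z \<bullet>c v = - (v \<bullet>c z)"
  proof -
    have "z \<bullet>c v = w \<bullet>c (adjm R *\<^sub>v v)" unfolding z_def using adjm_ip[OF R w v] .
    also have "\<dots> = - (w \<bullet>c (R *\<^sub>v v))" using R v by (simp add: aR ip_neg_right)
    also have "w \<bullet>c (R *\<^sub>v v) = v \<bullet>c (adjm H *\<^sub>v (R *\<^sub>v v))" unfolding w_def using adjm_ip[OF H v Rv] .
    also have "\<dots> = v \<bullet>c ((H * R) *\<^sub>v v)" using H R v aH by simp
    also have "\<dots> = v \<bullet>c z" unfolding z_def w_def c[symmetric] using H R v by simp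
    finally show ?thesis .
  qed
  have "Re (z \<bullet>c v) = 0"
  proof -
    have "v \<bullet>c z = cnj (z \<bullet>c v)" using ip_cnj[OF v z] .
    with zv have e: "z \<bullet>c v = - cnj (z \<bullet>c v)" by simp
    have "Re (z \<bullet>c v) = - Re (z \<bullet>c v)" using arg_cong[OF e, of Re] by simp
    thus ?thesis by simp
  qed
  moreover have "z \<bullet>c z = w \<bullet>c w"
  proof -
    have "z \<bullet>c z = w \<bullet>c (adjm R *\<^sub>v z)" unfolding z_def using adjm_ip[OF R w z] z_def by simp
    also have "\<dots> = - (w \<bullet>c (R *\<^sub>v (R *\<^sub>v w)))" using R z by (simp add: aR ip_neg_right z_def)
    also have "R *\<^sub>v (R *\<^sub>v w) = (R * R) *\<^sub>v w" using R w by simp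
    also have "\<dots> = - w" using w by (simp add: RR)
    finally show ?thesis by (simp add: ip_neg_right)
  qed
  moreover have "(complex_of_real a \<cdot>\<^sub>m 1\<^sub>m n + complex_of_real c \<cdot>\<^sub>m (R * H)) *\<^sub>v v = complex_of_real a \<cdot>\<^sub>v v + complex_of_real c \<cdot>\<^sub>v z"
    unfolding lin_vec[OF RH v] z_def w_def using R H v by simp
  ultimately show ?thesis unfolding nsq_def using ip_expand[OF v z, of a c] w_def by simp
qed

lemma H0_map: assumes K: "K \<in> carrier_mat m m"
  shows "H0 m (map_mat complex_of_real K) = map_mat complex_of_real (four_block_mat K (0\<^sub>m m m) (0\<^sub>m m m) K)"
  by (rule eq_matI) (insert K, auto simp: H0_def)

lemma zmv[simp]: "x \<in> carrier_vec k \<Longrightarrow> 0\<^sub>m n k *\<^sub>v (x :: real vec) = 0\<^sub>v n"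
  by (rule eq_vecI) (auto simp: scalar_prod_def)

lemma blk_qf: assumes K: "(K :: real mat) \<in> carrier_mat m m" and p: "p \<in> carrier_vec (m+m)"
  shows "p \<bullet> (four_block_mat K (0\<^sub>m m m) (0\<^sub>m m m) K *\<^sub>v p) =
     vec_first p m \<bullet> (K *\<^sub>v vec_first p m) + vec_last p m \<bullet> (K *\<^sub>v vec_last p m)"
proof -
  have pe: "p = vec_first p m @\<^sub>v vec_last p m" using p by simp
  show ?thesis
    apply (subst (1 2) pe)
    apply (subst four_block_mat_mult_vec[OF K zero_carrier_mat zero_carrier_mat K vec_first_carrier vec_last_carrier])
    apply (subst scalar_prod_append[of _ m _ m])
    using K by (auto simp: add_carrier_vec)
qed

lemma blk_psd: assumes K: "sym_psd_mat m K" and p: "p \<in> carrier_vec (m+m)"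
  shows "0 \<le> p \<bullet> (four_block_mat K (0\<^sub>m m m) (0\<^sub>m m m) K *\<^sub>v p)"
  using K p unfolding blk_qf[OF _ p] sym_psd_mat_def
  by (subst blk_qf) (auto intro!: add_nonneg_nonneg)

lemma blk_pd: assumes K: "sym_pd_mat m K" and p: "p \<in> carrier_vec (m+m)" and p0: "p \<noteq> 0\<^sub>v (m+m)"
  shows "0 < p \<bullet> (four_block_mat K (0\<^sub>m m m) (0\<^sub>m m m) K *\<^sub>v p)"
proof -
  have Kc: "K \<in> carrier_mat m m" and pd: "\<And>x. x \<in> carrier_vec m \<Longrightarrow> x \<noteq> 0\<^sub>v m \<Longrightarrow> 0 < x \<bullet> (K *\<^sub>v x)"
    using K unfolding sym_pd_mat_def by auto
  have nn: "\<And>x. x \<in> carrier_vec m \<Longrightarrow> 0 \<le> x \<bullet> (K *\<^sub>v x)"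
    using pd by (metis Kc eq_iff less_imp_le mult_mat_vec_carrier scalar_prod_left_zero)
  have "vec_first p m \<noteq> 0\<^sub>v m \<or> vec_last p m \<noteq> 0\<^sub>v m"
  proof (rule ccontr)
    assume "\<not> ?thesis"
    hence "p = 0\<^sub>v m @\<^sub>v 0\<^sub>v m" using vec_first_last_append[OF p] by simp
    also have "\<dots> = 0\<^sub>v (m+m)" by (rule eq_vecI) auto
    finally show False using p0 by simp
  qed
  thus ?thesis unfolding blk_qf[OF Kc p]
    using pd[of "vec_first p m"] pd[of "vec_last p m"] nn[of "vec_first p m"] nn[of "vec_last p m"]
    by auto
qed

lemma nsq_ge0: "0 \<le> nsq v"
  unfolding nsq_def using conjugate_square_ge_0_vec[of v] by (simp add: less_eq_complex_def)

lemma nsq_gt0: assumes "v \<in> carrier_vec n" "v \<noteq> 0\<^sub>v n" shows "0 < nsq v"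
  unfolding nsq_def using conjugate_square_greater_0_vec[OF assms(1)] assms by (simp add: less_complex_def)

lemma nsq_smult: "nsq (k \<cdot>\<^sub>v v) = (cmod k)^2 * nsq v"
proof -
  have "(k \<cdot>\<^sub>v v) \<bullet>c (k \<cdot>\<^sub>v v) = (k * cnj k) * (v \<bullet>c v)"
    by (simp add: scalar_prod_def sum_distrib_left algebra_simps)
  thus ?thesis unfolding nsq_def by (simp add: complex_mult_cnj cmod_power2)
qed

lemma nsq_zero: "nsq (0\<^sub>v n) = 0" by (simp add: nsq_def)

lemma Q_nonneg: assumes K: "sym_psd_mat m K" and u: "u \<in> carrier_vec (2*m)"
  shows "0 \<le> Re ((H0 m (map_mat complex_of_real K) *\<^sub>v u) \<bullet>c u)"
proof -
  have Kc: "K \<in> carrier_mat m m" using K sym_psd_mat_def by auto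
  have c: "four_block_mat K (0\<^sub>m m m) (0\<^sub>m m m) K \<in> carrier_mat (2*m) (2*m)"
    using four_block_carrier_mat[OF Kc Kc] by (simp add: mult_2)
  show ?thesis unfolding H0_map[OF Kc] re_quad[OF c u]
    using blk_psd[OF K, of "map_vec Re u"] blk_psd[OF K, of "map_vec Im u"] u
    by (auto simp: mult_2)
qed

lemma pd_psd: assumes K: "sym_pd_mat m K" shows "sym_psd_mat m K"
proof -
  have Kc: "K \<in> carrier_mat m m" using K sym_pd_mat_def by auto
  have "0 \<le> x \<bullet> (K *\<^sub>v x)" if x: "x \<in> carrier_vec m" for x
  proof (cases "x = 0\<^sub>v m")
    case True
    then show ?thesis using Kc by simp
  next
    case False
    then show ?thesis using K x unfolding sym_pd_mat_def by (simp add: less_imp_le)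
  qed
  thus ?thesis using K unfolding sym_pd_mat_def sym_psd_mat_def by auto
qed

lemma Q_pos: assumes K: "sym_pd_mat m K" and u: "u \<in> carrier_vec (2*m)" and u0: "u \<noteq> 0\<^sub>v (2*m)"
  shows "0 < Re ((H0 m (map_mat complex_of_real K) *\<^sub>v u) \<bullet>c u)"
proof -
  have Kc: "K \<in> carrier_mat m m" using K sym_pd_mat_def by auto
  have K': "sym_psd_mat m K" using pd_psd[OF K] .
  have c: "four_block_mat K (0\<^sub>m m m) (0\<^sub>m m m) K \<in> carrier_mat (2*m) (2*m)"
    using four_block_carrier_mat[OF Kc Kc] by (simp add: mult_2)
  define p where "p = map_vec Re u"
  define q where "q = map_vec Im u"
  have p: "p \<in> carrier_vec (m+m)" and q: "q \<in> carrier_vec (m+m)" using u by (auto simp: p_def q_def mult_2)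
  have "p \<noteq> 0\<^sub>v (m+m) \<or> q \<noteq> 0\<^sub>v (m+m)"
  proof (rule ccontr)
    assume "\<not> ?thesis"
    hence pz: "p = 0\<^sub>v (m+m)" and qz: "q = 0\<^sub>v (m+m)" by auto
    have "u $ i = 0\<^sub>v (2*m) $ i" if i: "i < 2*m" for i
    proof -
      have "p $ i = 0" "q $ i = 0" using pz qz i by (auto simp: mult_2)
      thus ?thesis using u i by (auto simp: p_def q_def complex_eq_iff)
    qed
    hence "u = 0\<^sub>v (2*m)" using u by (intro eq_vecI) auto
    thus False using u0 by simp
  qed
  note nz = this
  define F where "F = four_block_mat K (0\<^sub>m m m) (0\<^sub>m m m) K"
  have P1: "0 \<le> p \<bullet> (F *\<^sub>v p)" using blk_psd[OF K' p] unfolding F_def .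
  have P2: "0 \<le> q \<bullet> (F *\<^sub>v q)" using blk_psd[OF K' q] unfolding F_def .
  have "0 < p \<bullet> (F *\<^sub>v p) + q \<bullet> (F *\<^sub>v q)"
    using nz
  proof
    assume "p \<noteq> 0\<^sub>v (m+m)"
    hence "0 < p \<bullet> (F *\<^sub>v p)" using blk_pd[OF K p] unfolding F_def by blast
    thus ?thesis using P2 by linarith
  next
    assume "q \<noteq> 0\<^sub>v (m+m)"
    hence "0 < q \<bullet> (F *\<^sub>v q)" using blk_pd[OF K q] unfolding F_def by blast
    thus ?thesis using P1 by linarith
  qed
  moreover have "Re ((H0 m (map_mat complex_of_real K) *\<^sub>v u) \<bullet>c u) = p \<bullet> (F *\<^sub>v p) + q \<bullet> (F *\<^sub>v q)"
    unfolding F_def p_def q_def H0_map[OF Kc] by (rule re_quad[OF c u])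
  ultimately show ?thesis by (simp only:)
qed

lemma smult_Dm: "k \<cdot>\<^sub>m Dm m x = Dm m (k * x)"
  by (rule eq_matI) (auto simp: Dm_def)

lemma Rmat_eq: assumes nu: "\<nu> > 0" and om: "\<omega> > 0"
  shows "\<exists>r q. Rmat m \<nu> \<omega> = R0 m r q \<and> r^2 + q^2 = 1"
proof -
  define th where "th = theta \<nu> \<omega>"
  have th: "th = 1 + \<nu> * \<omega>^2" unfolding th_def theta_def ..
  have thpos: "th > 0" using th nu by (simp add: add_pos_nonneg)
  define c where "c = 1 / sqrt (\<nu> * th)"
  define r where "r = - (c * (\<omega> * \<nu>))"
  define q where "q = c * sqrt \<nu>"
  have "Rmat m \<nu> \<omega> = complex_of_real c \<cdot>\<^sub>m four_block_mat (Dm m (- \<i> * complex_of_real (\<omega> * \<nu>))) (Dm m (complex_of_real (sqrt \<nu>)))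
                    (Dm m (- complex_of_real (sqrt \<nu>))) (Dm m (\<i> * complex_of_real (\<omega> * \<nu>)))"
    unfolding Rmat_def Dm_def c_def th_def ..
  also have "\<dots> = R0 m r q"
    unfolding R0_def
    apply (subst smult_four_block_mat[OF Dm_carrier Dm_carrier Dm_carrier Dm_carrier])
    apply (simp only: smult_Dm)
    apply (rule cong_four_block_mat)
    by (simp_all add: r_def q_def ac_simps)
  finally have e: "Rmat m \<nu> \<omega> = R0 m r q" .
  have s2: "(sqrt (\<nu> * th))^2 = \<nu> * th" using nu thpos by simp
  have sp: "sqrt (\<nu> * th) > 0" using nu thpos by simp
  have "r^2 + q^2 = c^2 * (\<omega>^2 * \<nu>^2 + \<nu>)"
    unfolding r_def q_def using nu by (simp add: power_mult_distrib algebra_simps)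
  also have "\<dots> = (\<omega>^2 * \<nu>^2 + \<nu>) / (\<nu> * th)"
    unfolding c_def using s2 by (simp add: power_divide)
  also have "\<dots> = 1"
  proof -
    have "\<omega>^2 * \<nu>^2 + \<nu> = \<nu> * th" unfolding th by (simp add: algebra_simps power2_eq_square)
    moreover have "\<nu> * th \<noteq> 0" using nu thpos by simp
    ultimately show ?thesis by simp
  qed
  finally show ?thesis using e by blast
qed

lemma blkdiag_H0: "blkdiag m K = H0 m (map_mat complex_of_real K)"
  by (simp add: blkdiag_def H0_def)

lemma minus_smult_mat: "(C :: complex mat) \<in> carrier_mat n n \<Longrightarrow> D \<in> carrier_mat n n \<Longrightarrow> C - k \<cdot>\<^sub>m D = C + (-k) \<cdot>\<^sub>m D"
  by (rule eq_matI) (auto simp: algebra_simps)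

lemma inv_ok:
  assumes H: "H \<in> carrier_mat n n" and a: "\<alpha> > 0" and c: "c \<ge> 0"
    and Q: "\<And>v. v \<in> carrier_vec n \<Longrightarrow> 0 \<le> Re ((H *\<^sub>v v) \<bullet>c v)"
  shows "\<exists>Bi. minv (complex_of_real \<alpha> \<cdot>\<^sub>m 1\<^sub>m n + complex_of_real c \<cdot>\<^sub>m H) = Bi \<and>
     (complex_of_real \<alpha> \<cdot>\<^sub>m 1\<^sub>m n + complex_of_real c \<cdot>\<^sub>m H) * Bi = 1\<^sub>m n \<and>
     Bi * (complex_of_real \<alpha> \<cdot>\<^sub>m 1\<^sub>m n + complex_of_real c \<cdot>\<^sub>m H) = 1\<^sub>m n \<and> Bi \<in> carrier_mat n n"
proof -
  define B where "B = complex_of_real \<alpha> \<cdot>\<^sub>m 1\<^sub>m n + complex_of_real c \<cdot>\<^sub>m H"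
  have Bc: "B \<in> carrier_mat n n" unfolding B_def using H by simp
  have inj: "B *\<^sub>v v \<noteq> 0\<^sub>v n" if v: "v \<in> carrier_vec n" "v \<noteq> 0\<^sub>v n" for v
  proof
    assume "B *\<^sub>v v = 0\<^sub>v n"
    hence "nsq (B *\<^sub>v v) = 0" by (simp add: nsq_zero)
    moreover have "nsq (B *\<^sub>v v) = \<alpha>^2 * nsq v + 2 * \<alpha> * c * Re ((H *\<^sub>v v) \<bullet>c v) + c^2 * nsq (H *\<^sub>v v)"
      unfolding B_def by (rule plus_norm[OF H v(1)])
    moreover have "0 < \<alpha>^2 * nsq v" using nsq_gt0[OF v] a by simp
    moreover have "0 \<le> 2 * \<alpha> * c * Re ((H *\<^sub>v v) \<bullet>c v)" using Q[OF v(1)] a c by simp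
    moreover have "0 \<le> c^2 * nsq (H *\<^sub>v v)" using nsq_ge0 by simp
    ultimately show False by linarith
  qed
  have d: "det B \<noteq> 0" using det_0_iff_vec_prod_zero[OF Bc] inj by blast
  have u: "B \<in> Units (ring_mat TYPE(complex) n ())" by (rule det_non_zero_imp_unit[OF Bc d])
  obtain Bi where Bi: "mat_inverse B = Some Bi"
    using mat_inverse(1)[OF Bc, where b="()"] u by (cases "mat_inverse B") auto
  show ?thesis using mat_inverse(2)[OF Bc Bi] Bi unfolding minv_def B_def[symmetric] by auto
qed

theorem mainTheorem3:
  fixes m :: nat and M K :: "real mat" and \<nu> \<omega> :: real
  assumes "m \<ge> 1"
    and "\<nu> > 0" and "\<omega> > 0"
    and "sym_psd_mat m M" and "sym_psd_mat m K"
    and "sym_pd_mat m M \<or> sym_pd_mat m K"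
  shows "\<forall>\<alpha>>0. spectral_radius (Palpha m \<nu> \<omega> M K \<alpha>) < 1"
proof (intro allI impI)
  note m1 = assms(1) and nu = assms(2) and om = assms(3) and Mpsd = assms(4) and Kpsd = assms(5) and pd = assms(6)
  fix \<alpha> :: real assume \<alpha>: "\<alpha> > 0"
  define n where "n = 2 * m"
  have n0: "n > 0" using m1 n_def by simp
  define th where "th = theta \<nu> \<omega>"
  have thpos: "th > 0" unfolding th_def theta_def using nu by (simp add: add_pos_nonneg)
  define s where "s = sqrt (\<nu> * th)"
  have spos: "s > 0" unfolding s_def using nu thpos by simp
  have Mc: "M \<in> carrier_mat m m" "transpose_mat M = M" using Mpsd sym_psd_mat_def by auto
  have Kc: "K \<in> carrier_mat m m" "transpose_mat K = K" using Kpsd sym_psd_mat_def by auto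
  define H1 where "H1 = H0 m (map_mat complex_of_real M)"
  define H2 where "H2 = H0 m (map_mat complex_of_real K)"
  obtain r q where Req: "Rmat m \<nu> \<omega> = R0 m r q" and rq: "r^2 + q^2 = 1" using Rmat_eq[OF nu om] by blast
  define R where "R = R0 m r q"
  have Rc: "R \<in> carrier_mat n n" unfolding R_def n_def by simp
  have H1c: "H1 \<in> carrier_mat n n" unfolding H1_def n_def using Mc by simp
  have H2c: "H2 \<in> carrier_mat n n" unfolding H2_def n_def using Kc by simp
  have aR: "adjm R = - R" unfolding R_def by (rule R0_adj)
  have RR: "R * R = - 1\<^sub>m n" unfolding R_def n_def by (rule R0_sq[OF rq])
  have aH1: "adjm H1 = H1" unfolding H1_def by (rule H0_adj[OF Mc])
  have aH2: "adjm H2 = H2" unfolding H2_def by (rule H0_adj[OF Kc])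
  have c1: "R * H1 = H1 * R" unfolding R_def H1_def by (rule R0_H0_comm) (use Mc in simp)
  have c2: "R * H2 = H2 * R" unfolding R_def H2_def by (rule R0_H0_comm) (use Kc in simp)
  have Q1: "\<And>v. v \<in> carrier_vec n \<Longrightarrow> 0 \<le> Re ((H1 *\<^sub>v v) \<bullet>c v)"
    unfolding H1_def n_def by (rule Q_nonneg[OF Mpsd])
  have Q2: "\<And>v. v \<in> carrier_vec n \<Longrightarrow> 0 \<le> Re ((H2 *\<^sub>v v) \<bullet>c v)"
    unfolding H2_def n_def by (rule Q_nonneg[OF Kpsd])
  define A where "A = complex_of_real \<alpha> \<cdot>\<^sub>m 1\<^sub>m n + complex_of_real s \<cdot>\<^sub>m H2"
  define X where "X = complex_of_real \<alpha> \<cdot>\<^sub>m 1\<^sub>m n + complex_of_real th \<cdot>\<^sub>m (R * H1)"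
  define B where "B = complex_of_real \<alpha> \<cdot>\<^sub>m 1\<^sub>m n + complex_of_real th \<cdot>\<^sub>m H1"
  define Y where "Y = complex_of_real \<alpha> \<cdot>\<^sub>m 1\<^sub>m n + complex_of_real (- s) \<cdot>\<^sub>m (R * H2)"
  have Ac: "A \<in> carrier_mat n n" unfolding A_def using H2c by simp
  have Bc: "B \<in> carrier_mat n n" unfolding B_def using H1c by simp
  have Xc: "X \<in> carrier_mat n n" unfolding X_def using H1c Rc by simp
  have Yc: "Y \<in> carrier_mat n n" unfolding Y_def using H2c Rc by simp
  obtain Ai where Ai: "minv A = Ai" "A * Ai = 1\<^sub>m n" "Ai * A = 1\<^sub>m n" "Ai \<in> carrier_mat n n"
    using inv_ok[OF H2c \<alpha> _ Q2, of s] spos unfolding A_def by auto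
  obtain Bi where Bi: "minv B = Bi" "B * Bi = 1\<^sub>m n" "Bi * B = 1\<^sub>m n" "Bi \<in> carrier_mat n n"
    using inv_ok[OF H1c \<alpha> _ Q1, of th] thpos unfolding B_def by auto
  have Peq: "Palpha m \<nu> \<omega> M K \<alpha> = Ai * X * Bi * Y"
  proof -
    have "complex_of_real \<alpha> \<cdot>\<^sub>m 1\<^sub>m n - complex_of_real s \<cdot>\<^sub>m (R * H2) = Y"
      unfolding Y_def using Rc H2c by (subst minus_smult_mat[of _ n]) auto
    thus ?thesis
      unfolding Palpha_def Let_def blkdiag_H0 Req Ai(1)[symmetric] Bi(1)[symmetric]
      unfolding A_def X_def B_def H1_def[symmetric] H2_def[symmetric] R_def[symmetric] th_def[symmetric] s_def[symmetric] n_def[symmetric]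
      by simp
  qed
  define P where "P = Ai * X * Bi * Y"
  have Pc: "P \<in> carrier_mat n n" unfolding P_def using Ai(4) Bi(4) Xc Yc by (metis mult_carrier_mat)
  have ev: "cmod l < 1" if l: "eigenvalue P l" for l
  proof -
    obtain v where v: "v \<in> carrier_vec n" "v \<noteq> 0\<^sub>v n" "P *\<^sub>v v = l \<cdot>\<^sub>v v"
      using l Pc unfolding eigenvalue_def eigenvector_def by auto
    define w where "w = Bi *\<^sub>v (Y *\<^sub>v v)"
    have w: "w \<in> carrier_vec n" unfolding w_def using Bi(4) Yc v(1) by simp
    have AX: "Ai * X \<in> carrier_mat n n" using Ai(4) Xc by simp
    have AXB: "Ai * X * Bi \<in> carrier_mat n n" using AX Bi(4) by simp
    have Yv: "Y *\<^sub>v v \<in> carrier_vec n" using Yc v(1) by simp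
    have "P *\<^sub>v v = (Ai * X * Bi) *\<^sub>v (Y *\<^sub>v v)" unfolding P_def by (rule assoc_mult_mat_vec[OF AXB Yc v(1)])
    also have "\<dots> = (Ai * X) *\<^sub>v w" unfolding w_def by (rule assoc_mult_mat_vec[OF AX Bi(4) Yv])
    also have "\<dots> = Ai *\<^sub>v (X *\<^sub>v w)" by (rule assoc_mult_mat_vec[OF Ai(4) Xc w])
    finally have Pv: "P *\<^sub>v v = Ai *\<^sub>v (X *\<^sub>v w)" .
    have Xw: "X *\<^sub>v w = l \<cdot>\<^sub>v (A *\<^sub>v v)"
    proof -
      have "A *\<^sub>v (P *\<^sub>v v) = (A * Ai) *\<^sub>v (X *\<^sub>v w)" unfolding Pv using Ac Ai(4) Xc w by simp
      also have "\<dots> = X *\<^sub>v w" using Ai(2) Xc w by simp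
      finally have "X *\<^sub>v w = A *\<^sub>v (l \<cdot>\<^sub>v v)" unfolding v(3) by simp
      thus ?thesis using mult_mat_vec[OF Ac v(1)] by simp
    qed
    have Bw: "B *\<^sub>v w = Y *\<^sub>v v"
    proof -
      have "B *\<^sub>v w = (B * Bi) *\<^sub>v (Y *\<^sub>v v)" unfolding w_def using Bc Bi(4) Yc v(1) by simp
      thus ?thesis using Bi(2) Yc v(1) by simp
    qed
    have n1: "nsq (X *\<^sub>v w) = \<alpha>^2 * nsq w + th^2 * nsq (H1 *\<^sub>v w)"
      unfolding X_def by (rule rot_norm[OF Rc H1c aR RR aH1 c1 w])
    have n2: "nsq (B *\<^sub>v w) = \<alpha>^2 * nsq w + 2 * \<alpha> * th * Re ((H1 *\<^sub>v w) \<bullet>c w) + th^2 * nsq (H1 *\<^sub>v w)"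
      unfolding B_def by (rule plus_norm[OF H1c w])
    have n3: "nsq (Y *\<^sub>v v) = \<alpha>^2 * nsq v + (-s)^2 * nsq (H2 *\<^sub>v v)"
      unfolding Y_def by (rule rot_norm[OF Rc H2c aR RR aH2 c2 v(1)])
    have n4: "nsq (A *\<^sub>v v) = \<alpha>^2 * nsq v + 2 * \<alpha> * s * Re ((H2 *\<^sub>v v) \<bullet>c v) + s^2 * nsq (H2 *\<^sub>v v)"
      unfolding A_def by (rule plus_norm[OF H2c v(1)])
    have n5: "nsq (X *\<^sub>v w) = (cmod l)^2 * nsq (A *\<^sub>v v)" unfolding Xw by (rule nsq_smult)
    have q1: "0 \<le> Re ((H1 *\<^sub>v w) \<bullet>c w)" by (rule Q1[OF w])
    have q2: "0 \<le> Re ((H2 *\<^sub>v v) \<bullet>c v)" by (rule Q2[OF v(1)])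
    have Npos: "0 < nsq (A *\<^sub>v v)"
    proof -
      have "0 < \<alpha>^2 * nsq v" using nsq_gt0[OF v(1) v(2)] \<alpha> by simp
      moreover have "0 \<le> 2 * \<alpha> * s * Re ((H2 *\<^sub>v v) \<bullet>c v)" using q2 \<alpha> spos by simp
      moreover have "0 \<le> s^2 * nsq (H2 *\<^sub>v v)" using nsq_ge0 by simp
      ultimately show ?thesis unfolding n4 by linarith
    qed
    define L where "L = (cmod l)^2"
    define N where "N = nsq (A *\<^sub>v v)"
    have key: "L * N = N - 2 * \<alpha> * s * Re ((H2 *\<^sub>v v) \<bullet>c v) - 2 * \<alpha> * th * Re ((H1 *\<^sub>v w) \<bullet>c w)"
      using n1 n2 n3 n4 n5 Bw unfolding L_def N_def by (simp add: power2_eq_square)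
    have "L < 1"
    proof (cases "w = 0\<^sub>v n")
      case True
      have "X *\<^sub>v w = 0\<^sub>v n" unfolding True using Xc by (intro eq_vecI) (auto simp: scalar_prod_def)
      hence "nsq (X *\<^sub>v w) = 0" by (simp add: nsq_zero)
      hence "L * N = 0" using n5 unfolding L_def N_def by simp
      hence "L = 0" using Npos N_def by simp
      thus ?thesis by simp
    next
      case False
      have "0 < 2 * \<alpha> * s * Re ((H2 *\<^sub>v v) \<bullet>c v) + 2 * \<alpha> * th * Re ((H1 *\<^sub>v w) \<bullet>c w)"
        using pd
      proof
        assume "sym_pd_mat m M"
        hence "0 < Re ((H1 *\<^sub>v w) \<bullet>c w)" unfolding H1_def using Q_pos w False unfolding n_def by blast
        thus ?thesis using q2 \<alpha> spos thpos by (simp add: add_nonneg_pos)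
      next
        assume "sym_pd_mat m K"
        hence "0 < Re ((H2 *\<^sub>v v) \<bullet>c v)" unfolding H2_def using Q_pos v unfolding n_def by blast
        thus ?thesis using q1 \<alpha> spos thpos by (simp add: add_pos_nonneg)
      qed
      hence "L * N < 1 * N" using key by linarith
      thus ?thesis using Npos N_def by (simp add: mult_less_cancel_right)
    qed
    hence "(cmod l)^2 < 1^2" unfolding L_def by simp
    thus ?thesis by (rule power_less_imp_less_base) simp
  qed
  have "spectral_radius P \<in> norm ` spectrum P" by (rule spectral_radius_mem_max(1)[OF Pc n0])
  then obtain l where "eigenvalue P l" "spectral_radius P = cmod l" unfolding spectrum_def by auto
  thus "spectral_radius (Palpha m \<nu> \<omega> M K \<alpha>) < 1" using ev unfolding Peq P_def[symmetric] by simp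
qed

end
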